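(* For every $m\in\mathbb N$, \[ \frac{e^m}{m^{1/4}e^2}\le\Big(\sum_{j=0}^m\Big(\frac{m^j}{j!}\Big)^2\Big)^{1/2}\le\frac{e^m}{m^{1/4}}. \] *)

theory Defs
  imports Complex_Main
begin

end

theory Submission
  imports Defs
begin

lemma L1: fixes x :: real assumes "x \<ge> 0" shows "2*x/(2+x) \<le> ln (1+x)"
proof -
  let ?h = "\<lambda>x::real. ln (1+x) - 2*x/(2+x)"
  have "?h 0 \<le> ?h x"
  proof (rule DERIV_nonneg_imp_nondecreasing[OF assms])
    fix y :: real assume y: "0 \<le> y" "y \<le> x"
    have "(?h has_real_derivative (1/(1+y) - (2*(2+y) - 2*y)/(2+y)^2)) (at y)"
      using y by (auto intro!: derivative_eq_intros simp: power2_eq_square)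
    moreover have "1/(1+y) - (2*(2+y) - 2*y)/(2+y)^2 \<ge> 0"
    proof -
      have "(2*(2+y) - 2*y)/(2+y)^2 = 4/(2+y)^2" by simp
      also have "\<dots> \<le> 1/(1+y)" using y
      proof -
        have "4*(1+y) \<le> (2+y)^2" by (simp add: power2_eq_square algebra_simps)
        thus ?thesis using y by (simp add: field_simps)
      qed
      finally show ?thesis by simp
    qed
    ultimately show "\<exists>d. (?h has_real_derivative d) (at y) \<and> 0 \<le> d" by blast
  qed
  then show ?thesis by simp
qed

lemma L2: fixes x :: real assumes "x \<ge> 0" shows "ln (1+x) \<le> x - x^2/2 + x^3/3"
proof -
  let ?h = "\<lambda>x::real. x - x^2/2 + x^3/3 - ln (1+x)"
  have "?h 0 \<le> ?h x"
  proof (rule DERIV_nonneg_imp_nondecreasing[OF assms])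
    fix y :: real assume y: "0 \<le> y" "y \<le> x"
    have "(?h has_real_derivative (1 - y + y^2 - 1/(1+y))) (at y)"
      using y by (auto intro!: derivative_eq_intros simp: power2_eq_square)
    moreover have "1 - y + y^2 - 1/(1+y) = y^3/(1+y)"
      using y by (simp add: field_simps power2_eq_square power3_eq_cube)
    moreover have "y^3/(1+y) \<ge> 0" using y by simp
    ultimately show "\<exists>d. (?h has_real_derivative d) (at y) \<and> 0 \<le> d" by metis
  qed
  then show ?thesis by simp
qed

lemma K2: fixes m :: nat assumes "m \<ge> 1"
  shows "exp 2 * real m ^ (2*m+1) \<le> real (m+1) ^ (2*m+1)"
proof -
  have mp: "real m > 0" using assms by simp
  have "2 / (2*real m + 1) \<le> ln (1 + 1/real m)"
    using L1[of "1/real m"] mp by (simp add: field_simps)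
  hence "2 \<le> (2*real m + 1) * ln (1 + 1/real m)" using mp by (simp add: field_simps)
  also have "ln (1 + 1/real m) = ln (real (m+1)) - ln (real m)"
  proof -
    have "1 + 1/real m = real (m+1) / real m" using mp by (simp add: field_simps)
    thus ?thesis using mp by (simp add: ln_div del: of_nat_Suc)
  qed
  finally have "2 + (2*real m+1) * ln (real m) \<le> (2*real m+1) * ln (real (m+1))"
    by (simp add: algebra_simps)
  hence "exp (2 + (2*real m+1) * ln (real m)) \<le> exp ((2*real m+1) * ln (real (m+1)))" by simp
  moreover have "(2*real m+1) * ln (real m) = ln (real m ^ (2*m+1))"
    by (subst ln_realpow) simp
  moreover have "(2*real m+1) * ln (real (m+1)) = ln (real (m+1) ^ (2*m+1))"
    by (subst ln_realpow) simp
  ultimately have A: "2 + ln (real m ^ (2*m+1)) \<le> ln (real (m+1) ^ (2*m+1))" by simp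
  have "exp (2 + ln (real m ^ (2*m+1))) \<le> exp (ln (real (m+1) ^ (2*m+1)))"
    using A by (rule exp_le_cancel_iff[THEN iffD2])
  moreover have "exp (2 + ln (real m ^ (2*m+1))) = exp 2 * real m ^ (2*m+1)"
    using mp by (simp add: exp_add)
  moreover have "exp (ln (real (m+1) ^ (2*m+1))) = real (m+1) ^ (2*m+1)"
    using mp by (simp del: of_nat_Suc)
  ultimately show ?thesis by simp
qed

lemma exp1_ge: "5/2 \<le> exp (1::real)"
  using exp_lower_Taylor_quadratic[of 1] by simp

lemma exp2_ge: "6 \<le> exp (2::real)"
proof -
  have "exp (2::real) = exp 1 * exp 1" by (simp flip: exp_add)
  thus ?thesis using exp1_ge mult_mono[OF exp1_ge exp1_ge] by simp
qed

lemma exp4_ge: "32 \<le> exp (4::real)"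
proof -
  have "exp (4::real) = exp 2 * exp 2" by (simp flip: exp_add)
  thus ?thesis using exp2_ge mult_mono[OF exp2_ge exp2_ge] by simp
qed

lemma K1: fixes m :: nat assumes "m \<ge> 1"
  shows "real (m+1) ^ (2*m) * real (m+2) \<le> exp 2 * real m ^ (2*m) * real (m+1)"
proof (cases "m = 1")
  case True
  thus ?thesis using exp2_ge by simp
next
  case False
  hence m2: "m \<ge> 2" using assms by simp
  have mp: "real m > 0" using assms by simp
  have l1: "ln (1 + 1/real m) \<le> 1/real m - (1/real m)^2/2 + (1/real m)^3/3"
    using L2[of "1/real m"] by simp
  have l2: "ln (1 + 1/real (m+1)) \<le> 1/real (m+1)"
    using ln_add_one_self_le_self[of "1/real (m+1)"] by simp
  have key: "2 * real m * (1/real m - (1/real m)^2/2 + (1/real m)^3/3) + 1/real (m+1) \<le> 2"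
  proof -
    have "2 * real m * (1/real m - (1/real m)^2/2 + (1/real m)^3/3) = 2 - 1/real m + 2/(3*real m^2)"
      using mp by (simp add: field_simps power2_eq_square power3_eq_cube)
    moreover have "2/(3*real m^2) + 1/real (m+1) \<le> 1/real m"
    proof -
      have "2*(real m+1) + 3*real m^2 \<le> 3*real m*(real m+1)" using m2
        by (simp add: power2_eq_square algebra_simps)
      have eq: "2/(3*real m^2) + 1/real (m+1) = (2*(real m+1)+3*real m^2)/(3*real m^2*(real m+1))"
        using mp by (simp add: field_simps power2_eq_square)
      have "(2*(real m+1)+3*real m^2)/(3*real m^2*(real m+1)) \<le> (3*real m*(real m+1))/(3*real m^2*(real m+1))"
        by (rule divide_right_mono) (use \<open>2*(real m+1) + 3*real m^2 \<le> 3*real m*(real m+1)\<close> in auto)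
      also have "(3*real m*(real m+1))/(3*real m^2*(real m+1)) = 1/real m"
        using mp by (simp add: power2_eq_square)
      finally show ?thesis using eq by simp
    qed
    ultimately show ?thesis by simp
  qed
  have e1: "ln (1 + 1/real m) = ln (real (m+1)) - ln (real m)"
  proof -
    have "1 + 1/real m = real (m+1) / real m" using mp by (simp add: field_simps)
    thus ?thesis using mp by (simp add: ln_div del: of_nat_Suc)
  qed
  have e2: "ln (1 + 1/real (m+1)) = ln (real (m+2)) - ln (real (m+1))"
  proof -
    have "1 + 1/real (m+1) = real (m+2) / real (m+1)" by (simp add: field_simps)
    thus ?thesis by (simp add: ln_div del: of_nat_Suc)
  qed
  have "2 * real m * ln (1 + 1/real m) + ln (1 + 1/real (m+1)) \<le> 2"
    using key l1 l2 mp by (smt (verit, best) mult_left_mono)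
  hence A: "ln (real (m+1) ^ (2*m) * real (m+2)) \<le> ln (exp 2 * real m ^ (2*m) * real (m+1))"
    using mp unfolding e1 e2 by (simp add: ln_mult ln_realpow algebra_simps del: of_nat_Suc)
  show ?thesis
    using A mp by (subst (asm) ln_le_cancel_iff) (auto simp del: of_nat_Suc)
qed

lemma Qfact: fixes m :: nat assumes "m \<ge> 1"
  shows "real m ^ (2*m) * real (m+1) \<le> (fact m)^2 * exp (real m)^2"
  using assms
proof (induction m rule: dec_induct)
  case base
  then show ?case using exp2_ge by (simp add: power2_eq_square flip: exp_add)
next
  case (step n)
  have "real (Suc n) ^ (2 * Suc n) * real (Suc n + 1)
      = real (n+1)^2 * (real (n+1) ^ (2*n) * real (n+2))"
    by (simp add: power_add power2_eq_square algebra_simps del: of_nat_Suc)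
  also have "\<dots> \<le> real (n+1)^2 * (exp 2 * real n ^ (2*n) * real (n+1))"
    by (rule mult_left_mono[OF K1[OF step.hyps(1)]]) simp
  also have "\<dots> = real (n+1)^2 * exp 2 * (real n ^ (2*n) * real (n+1))" by simp
  also have "\<dots> \<le> real (n+1)^2 * exp 2 * ((fact n)^2 * exp (real n)^2)"
    by (rule mult_left_mono[OF step.IH]) simp
  also have "\<dots> = (fact (Suc n))^2 * exp (real (Suc n))^2"
  proof -
    have "exp (real (Suc n)) = exp (real n) * exp 1" by (simp add: exp_add[symmetric])
    moreover have "exp (2::real) = exp 1 * exp 1" by (simp flip: exp_add)
    ultimately show ?thesis by (simp add: power2_eq_square algebra_simps del: of_nat_Suc)
  qed
  finally show ?case .
qed

lemma Pfact: fixes m :: nat assumes "m \<ge> 1"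
  shows "(fact m)^2 * exp (real m)^2 \<le> exp 2 * real m ^ (2*m+1)"
  using assms
proof (induction m rule: dec_induct)
  case base
  then show ?case by (simp add: power2_eq_square flip: exp_add)
next
  case (step n)
  have "(fact (Suc n))^2 * exp (real (Suc n))^2 = real (n+1)^2 * exp 2 * ((fact n)^2 * exp (real n)^2)"
  proof -
    have "exp (real (Suc n)) = exp (real n) * exp 1" by (simp add: exp_add[symmetric])
    moreover have "exp (2::real) = exp 1 * exp 1" by (simp flip: exp_add)
    ultimately show ?thesis by (simp add: power2_eq_square algebra_simps del: of_nat_Suc)
  qed
  also have "\<dots> \<le> real (n+1)^2 * exp 2 * (exp 2 * real n ^ (2*n+1))"
    by (rule mult_left_mono[OF step.IH]) simp
  also have "\<dots> \<le> real (n+1)^2 * exp 2 * real (n+1) ^ (2*n+1)"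
    by (rule mult_left_mono[OF K2[OF step.hyps(1)]]) simp
  also have "\<dots> = exp 2 * real (Suc n) ^ (2 * Suc n + 1)"
    by (simp add: power_add power2_eq_square algebra_simps del: of_nat_Suc)
  finally show ?case .
qed

lemma exp_partial: fixes x :: real assumes "x \<ge> 0"
  shows "(\<Sum>j=0..m. x^j / fact j) \<le> exp x"
proof -
  have "(\<lambda>n. x^n / fact n) sums exp x"
    using exp_converges[of x] by (simp add: divide_inverse scaleR_conv_of_real mult.commute)
  hence "(\<Sum>j\<in>{0..m}. x^j / fact j) \<le> suminf (\<lambda>n. x^n / fact n)"
    by (intro sum_le_suminf) (use assms in \<open>auto simp: sums_iff\<close>)
  thus ?thesis using \<open>(\<lambda>n. x^n / fact n) sums exp x\<close> by (simp add: sums_iff)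
qed

lemma a_mono: fixes m j :: nat assumes "j \<le> m"
  shows "real m ^ j / fact j \<le> real m ^ m / fact m"
  using assms
proof (induction j rule: inc_induct)
  case base then show ?case by simp
next
  case (step n)
  have "real m ^ n / fact n \<le> real m ^ Suc n / fact (Suc n)"
  proof -
    have "real m ^ Suc n / fact (Suc n) = (real m ^ n / fact n) * (real m / real (Suc n))"
      by (simp add: field_simps)
    moreover have "real m / real (Suc n) \<ge> 1" using step.hyps by simp
    moreover have "real m ^ n / fact n \<ge> 0" by simp
    ultimately show ?thesis
      using mult_left_mono[of 1 "real m / real (Suc n)" "real m ^ n / fact n"] by simp
  qed
  then show ?case using step.IH by linarith
qed

lemma fact_ratio: "fact j * real (j+1) ^ i \<le> (fact (j+i) :: real)"
proof (induction i)
  case 0 then show ?case by simp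
next
  case (Suc i)
  have "fact j * real (j+1) ^ Suc i = (fact j * real (j+1) ^ i) * real (j+1)" by simp
  also have "\<dots> \<le> fact (j+i) * real (j+i+1)"
    by (rule mult_mono[OF Suc.IH]) auto
  also have "\<dots> = fact (j + Suc i)" by (simp add: algebra_simps)
  finally show ?case .
qed

lemma exists_k: "\<exists>k::nat. 2*k^2 \<le> m \<and> m < 2*(k+1)^2"
proof (induction m)
  case 0 then show ?case by (intro exI[of _ 0]) simp
next
  case (Suc m)
  then obtain k where k: "2*k^2 \<le> m" "m < 2*(k+1)^2" by blast
  show ?case
  proof (cases "Suc m < 2*(k+1)^2")
    case True with k show ?thesis by (intro exI[of _ k]) simp
  next
    case False
    hence "Suc m = 2*(k+1)^2" using k by simp
    thus ?thesis by (intro exI[of _ "k+1"]) (simp add: power2_eq_square)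
  qed
qed

lemma q4: assumes "(m::nat) \<ge> 1" shows "(real m powr (1/4))^4 = real m"
proof -
  have "(real m powr (1/4))^4 = real m powr ((1/4) * real 4)"
    by (subst powr_realpow[symmetric]) (use assms in \<open>auto simp: powr_powr\<close>)
  thus ?thesis using assms by simp
qed

theorem lemmaA2:
  fixes m :: nat
  assumes "m \<ge> 1"
  shows "exp (real m) / (real m powr (1/4) * exp 2)
           \<le> sqrt (\<Sum>j=0..m. (real m ^ j / fact j)^2) \<and>
         sqrt (\<Sum>j=0..m. (real m ^ j / fact j)^2) \<le> exp (real m) / real m powr (1/4)"
proof -
  define a where "a j = real m ^ j / fact j" for j
  define S where "S = (\<Sum>j=0..m. (a j)^2)"
  define q where "q = real m powr (1/4)"
  define e where "e = exp (real m)"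
  have mp: "real m > 0" using assms by simp
  have qp: "q > 0" unfolding q_def using mp by simp
  have q4': "q^4 = real m" unfolding q_def using q4[OF assms] .
  have ep: "e > 0" unfolding e_def by simp
  have a_nn: "a j \<ge> 0" for j unfolding a_def by simp
  have S_nn: "S \<ge> 0" unfolding S_def by (simp add: sum_nonneg)
  have am2: "(a m)^2 = real m ^ (2*m) / (fact m)^2"
    unfolding a_def by (simp add: power_divide power_mult mult.commute)
  have am_up: "(a m)^2 * real m \<le> e^2"
  proof -
    have "(a m)^2 * real (m+1) \<le> e^2"
      using Qfact[OF assms] unfolding am2 e_def by (simp add: field_simps del: of_nat_Suc)
    moreover have "(a m)^2 * real m \<le> (a m)^2 * real (m+1)" by (intro mult_left_mono) auto
    ultimately show ?thesis by linarith
  qed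
  have S_up: "S \<le> a m * e"
  proof -
    have "S = (\<Sum>j=0..m. a j * a j)" unfolding S_def by (simp add: power2_eq_square)
    also have "\<dots> \<le> (\<Sum>j=0..m. a m * a j)"
      by (intro sum_mono mult_right_mono) (auto simp: a_nn a_def intro: a_mono)
    also have "\<dots> = a m * (\<Sum>j=0..m. a j)" by (simp add: sum_distrib_left)
    also have "\<dots> \<le> a m * e"
      by (intro mult_left_mono) (auto simp: a_def e_def a_nn intro: exp_partial)
    finally show ?thesis .
  qed
  have aq: "a m * q^2 \<le> e"
  proof -
    have "(a m * q^2)^2 = (a m)^2 * real m" using q4' by (simp add: power_mult_distrib flip: power_mult)
    also have "\<dots> \<le> e^2" by (rule am_up)
    finally show ?thesis using ep by (simp add: power2_le_iff_abs_le)
  qed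
  have Sq: "S * q^2 \<le> e * e"
  proof -
    have "S * q^2 \<le> a m * e * q^2" using S_up qp by (simp add: mult_right_mono)
    also have "\<dots> = (a m * q^2) * e" by simp
    also have "\<dots> \<le> e * e" using aq ep by (simp add: mult_right_mono)
    finally show ?thesis .
  qed
  have up: "sqrt S \<le> e / q"
  proof -
    have "S \<le> (e/q)^2" using Sq qp by (simp add: field_simps power2_eq_square)
    thus ?thesis using ep qp by (intro real_le_lsqrt) auto
  qed
  obtain k where k: "2*k^2 \<le> m" "m < 2*(k+1)^2" using exists_k by blast
  have km: "k \<le> m" using k(1) by (metis le_square power2_eq_square le_trans mult_2 le_add1)
  have aj: "a m / 2 \<le> a j" if j: "m - k \<le> j" "j \<le> m" for j
  proof -
    define i where "i = m - j"
    have ji: "j + i = m" "i \<le> k" using j km unfolding i_def by auto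
    have "a m * (real (j+1) / real m)^i = real m ^ j * real (j+1) ^ i / fact m"
      unfolding a_def using mp ji(1)[symmetric] by (simp add: power_divide power_add field_simps)
    also have "\<dots> \<le> real m ^ j * real (j+1) ^ i / (fact j * real (j+1)^i)"
      using fact_ratio[of j i] ji(1) by (intro divide_left_mono mult_pos_pos) auto
    also have "\<dots> = a j" unfolding a_def by simp
    finally have A: "a m * (real (j+1) / real m)^i \<le> a j" .
    have "1 + real i * (- real i / real m) \<le> (1 + (- real i / real m))^i"
      by (rule Bernoulli_inequality) (use ji mp in \<open>simp add: field_simps\<close>)
    also have "1 + (- real i / real m) = real j / real m" using ji mp by (simp add: field_simps)
    also have "(real j / real m)^i \<le> (real (j+1) / real m)^i"
      by (intro power_mono divide_right_mono) auto
    finally have B: "1 - real i * real i / real m \<le> (real (j+1) / real m)^i" by simp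
    have "real i * real i \<le> real k * real k" using ji by (simp add: mult_mono)
    also have "real k * real k \<le> real m / 2" using k(1) by (simp add: power2_eq_square flip: of_nat_mult)
    finally have "real i * real i / real m \<le> 1/2" using mp by (simp add: field_simps)
    with B have "1/2 \<le> (real (j+1) / real m)^i" by linarith
    hence "a m * (1/2) \<le> a m * (real (j+1) / real m)^i" using a_nn by (intro mult_left_mono) auto
    with A show ?thesis by simp
  qed
  have S_low: "real (k+1) * (a m / 2)^2 \<le> S"
  proof -
    have "real (k+1) * (a m / 2)^2 = (\<Sum>j=m-k..m. (a m / 2)^2)" using km by simp
    also have "\<dots> \<le> (\<Sum>j=m-k..m. (a j)^2)"
      by (intro sum_mono power_mono) (use aj a_nn in auto)
    also have "\<dots> \<le> S" unfolding S_def
      by (intro sum_mono2) auto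
    finally show ?thesis .
  qed
  have am_low: "e^2 \<le> exp 2 * real m * (a m)^2"
    using Pfact[OF assms] unfolding am2 e_def by (simp add: field_simps)
  have e4: "exp (4::real) = exp 2 * exp 2" by (simp flip: exp_add)
  have kq: "4 * real m \<le> real (k+1) * q^2 * exp 2"
  proof -
    have "real m \<le> real (2*(k+1)^2)" by (subst of_nat_le_iff) (use k(2) in linarith)
    also have "real (2*(k+1)^2) = 2 * real (k+1)^2" by (simp only: of_nat_mult of_nat_power)
    finally have "16 * real m \<le> 32 * real (k+1)^2" by linarith
    also have "\<dots> \<le> exp 4 * real (k+1)^2" using exp4_ge by (intro mult_right_mono) auto
    finally have H: "16 * real m \<le> exp 4 * real (k+1)^2" .
    have E1: "(real (k+1) * q^2 * exp 2)^2 = (exp 4 * real (k+1)^2) * real m"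
    proof -
      have "(real (k+1) * q^2 * exp 2)^2 = real (k+1)^2 * (q^2)^2 * (exp 2)^2"
        by (simp only: power_mult_distrib)
      also have "(q^2)^2 = real m" using q4' by (simp only: power_mult[symmetric]) simp
      also have "(exp 2)^2 = exp (4::real)" using e4 by (simp only: power2_eq_square)
      finally show ?thesis by (simp only: mult_ac)
    qed
    have E2: "(4 * real m)^2 = (16 * real m) * real m" by (simp add: power2_eq_square)
    have "(16 * real m) * real m \<le> (exp 4 * real (k+1)^2) * real m"
      using H mp by (intro mult_right_mono) auto
    hence "(4 * real m)^2 \<le> (real (k+1) * q^2 * exp 2)^2" unfolding E1 E2 .
    thus ?thesis by (rule power2_le_imp_le) (use qp in auto)
  qed
  have low: "e / (q * exp 2) \<le> sqrt S"
  proof -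
    have "e^2 \<le> exp 2 * real m * (a m)^2" by (rule am_low)
    also have "\<dots> = exp 2 * (a m)^2 / 4 * (4 * real m)" by simp
    also have "\<dots> \<le> exp 2 * (a m)^2 / 4 * (real (k+1) * q^2 * exp 2)"
      by (intro mult_left_mono kq) auto
    also have "\<dots> = (real (k+1) * (a m / 2)^2) * (q^2 * (exp 2 * exp 2))"
      by (simp add: power2_eq_square)
    also have "\<dots> \<le> S * (q^2 * (exp 2 * exp 2))" using S_low qp by (intro mult_right_mono) auto
    finally have F: "e^2 \<le> S * (q^2 * (exp 2 * exp 2))" .
    have "(e / (q * exp 2))^2 = e^2 / (q^2 * (exp 2 * exp 2))"
      by (simp add: power_divide power_mult_distrib power2_eq_square)
    also have "\<dots> \<le> S" using F qp by (simp add: divide_le_eq)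
    finally have "(e / (q * exp 2))^2 \<le> S" .
    thus ?thesis by (rule real_le_rsqrt)
  qed
  show ?thesis using up low unfolding S_def a_def q_def e_def by simp
qed

end
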